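(* A pointed $(n+d,d)$-matching field is linkage if and only if its reduction is an $(n,d)$-matching left-semi-ensemble. Consequently, reduction is a bijection between linkage pointed $(n+d,d)$-matching fields and $(n,d)$-matching left-semi-ensembles.
   Context: Let $n,d$ be positive integers, $[\bar d]=\{\bar1,\dots,\bar d\}$, and $[\underline d]=\{\underline1,\dots,\underline d\}$ a further copy of $[d]$. A pointed $(n+d,d)$-matching field assigns to every $d$-element subset $\sigma\subseteq[n]\sqcup[\underline d]$ a bijection $M_\sigma:\sigma\to[\bar d]$ such that $M_\sigma(\underline j)=\bar j$ whenever $\underline j\in\sigma$; each $M_\sigma$ is viewed as a perfect matching graph between $\sigma$ and $[\bar d]$. It is linkage if for every $(d+1)$-element subset $\tau\subseteq[n]\sqcup[\underline d]$, the union of the graphs $M_\sigma$ over all $d$-subsets $\sigma\subset\tau$ is a spanning tree on $\tau\sqcup[\bar d]$ in which every vertex of $[\bar d]$ has degree $2$. An $(n,d)$-matching stack is a collection of bijections (partial matchings) $M_{I,\bar J}$ between $I$ and $\bar J$, one for each pair $I\subseteq[n]$, $\bar J\subseteq[\bar d]$ with $|I|=|\bar J|$, viewed as subgraphs of the complete bipartite graph on $[n]\sqcup[\bar d]$. It is a matching left-semi-ensemble if (Closure) whenever $I'\subseteq I$, $\bar J'\subseteq\bar J$ and $M_{I,\bar J}$ contains a perfect matching between $I'$ and $\bar J'$, then $M_{I',\bar J'}\subseteq M_{I,\bar J}$; and (Left linkage) for all $I,\bar J$ with $|I|=|\bar J|+1$, the union of $M_{I',\bar J}$ over all $I'\subset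 I$ with $|I'|=|\bar J|$ is a spanning tree on $I\sqcup\bar J$ in which every vertex of $\bar J$ has degree $2$. The reduction of a pointed matching field is the matching stack defined by: for each $d$-subset $\sigma$, let $\bar\sigma=\{\bar j:\underline j\in\sigma\}$; then $M_{\sigma\cap[n],\,[\bar d]\setminus\bar\sigma}$ is the restriction of $M_\sigma$ to $\sigma\cap[n]$. (This is a bijection between pointed matching fields and matching stacks.) *)

theory Defs
  imports Main
begin

text \<open>Conventions. [n] = {1..n}, [bar d] = {1..d} (as nat).  The ground set
  [n] disjoint-union [underline d] is encoded in type nat + nat:
  Inl i for i in [n], Inr j for underline j.  Matchings are edge sets
  (bipartite graphs); a bipartite edge set E between A and B is viewed as
  an undirected graph on the vertex set A <+> B.\<close>

definition ground :: "nat \<Rightarrow> nat \<Rightarrow> (nat + nat) set" where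
  "ground n d = Inl ` {1..n} \<union> Inr ` {1..d}"

definition is_pm :: "'a set \<Rightarrow> 'b set \<Rightarrow> ('a \<times> 'b) set \<Rightarrow> bool" where
  "is_pm A B E \<longleftrightarrow> E \<subseteq> A \<times> B \<and> (\<forall>a\<in>A. \<exists>!b. (a, b) \<in> E) \<and> (\<forall>b\<in>B. \<exists>!a. (a, b) \<in> E)"

definition bip_adj :: "('a \<times> 'b) set \<Rightarrow> ('a + 'b) \<Rightarrow> ('a + 'b) \<Rightarrow> bool" where
  "bip_adj E u v \<longleftrightarrow> (\<exists>a b. (a, b) \<in> E \<and> ((u = Inl a \<and> v = Inr b) \<or> (u = Inr b \<and> v = Inl a)))"

definition bip_cycle :: "('a \<times> 'b) set \<Rightarrow> ('a + 'b) list \<Rightarrow> bool" where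
  "bip_cycle E vs \<longleftrightarrow> 3 \<le> length vs \<and> distinct vs \<and>
     (\<forall>i < length vs. bip_adj E (vs ! i) (vs ! ((i + 1) mod length vs)))"

definition bip_spanning_tree :: "'a set \<Rightarrow> 'b set \<Rightarrow> ('a \<times> 'b) set \<Rightarrow> bool" where
  "bip_spanning_tree A B E \<longleftrightarrow> E \<subseteq> A \<times> B \<and>
     (\<forall>u \<in> A <+> B. \<forall>v \<in> A <+> B. (u, v) \<in> {(x, y). bip_adj E x y}\<^sup>*) \<and>
     \<not> (\<exists>vs. bip_cycle E vs)"

definition right_deg2 :: "'b set \<Rightarrow> ('a \<times> 'b) set \<Rightarrow> bool" where
  "right_deg2 B E \<longleftrightarrow> (\<forall>b\<in>B. card {a. (a, b) \<in> E} = 2)"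

text \<open>Pointed (n+d,d)-matching field.  M sigma is the graph of the bijection
  sigma -> [bar d] for d-subsets sigma of the ground set; for other sets
  (not in the domain) M is normalised to the empty set.\<close>
definition pointed_matching_field ::
  "nat \<Rightarrow> nat \<Rightarrow> ((nat + nat) set \<Rightarrow> ((nat + nat) \<times> nat) set) \<Rightarrow> bool" where
  "pointed_matching_field n d M \<longleftrightarrow>
     (\<forall>\<sigma>. if \<sigma> \<subseteq> ground n d \<and> card \<sigma> = d
           then is_pm \<sigma> {1..d} (M \<sigma>) \<and> (\<forall>j. Inr j \<in> \<sigma> \<longrightarrow> (Inr j, j) \<in> M \<sigma>)
           else M \<sigma> = {})"

definition linkage_pmf ::
  "nat \<Rightarrow> nat \<Rightarrow> ((nat + nat) set \<Rightarrow> ((nat + nat) \<times> nat) set) \<Rightarrow> bool" where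
  "linkage_pmf n d M \<longleftrightarrow>
     (\<forall>\<tau>. \<tau> \<subseteq> ground n d \<and> card \<tau> = d + 1 \<longrightarrow>
        (let G = \<Union>{M \<sigma> | \<sigma>. \<sigma> \<subseteq> \<tau> \<and> card \<sigma> = d}
         in bip_spanning_tree \<tau> {1..d} G \<and> right_deg2 {1..d} G))"

definition matching_stack ::
  "nat \<Rightarrow> nat \<Rightarrow> (nat set \<Rightarrow> nat set \<Rightarrow> (nat \<times> nat) set) \<Rightarrow> bool" where
  "matching_stack n d M \<longleftrightarrow>
     (\<forall>I J. if I \<subseteq> {1..n} \<and> J \<subseteq> {1..d} \<and> card I = card J
           then is_pm I J (M I J) else M I J = {})"

definition stack_closure ::
  "nat \<Rightarrow> nat \<Rightarrow> (nat set \<Rightarrow> nat set \<Rightarrow> (nat \<times> nat) set) \<Rightarrow> bool" where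
  "stack_closure n d M \<longleftrightarrow>
     (\<forall>I J I' J'. I \<subseteq> {1..n} \<and> J \<subseteq> {1..d} \<and> card I = card J \<and>
        I' \<subseteq> I \<and> J' \<subseteq> J \<and> (\<exists>N. N \<subseteq> M I J \<and> is_pm I' J' N)
        \<longrightarrow> M I' J' \<subseteq> M I J)"

definition stack_left_linkage ::
  "nat \<Rightarrow> nat \<Rightarrow> (nat set \<Rightarrow> nat set \<Rightarrow> (nat \<times> nat) set) \<Rightarrow> bool" where
  "stack_left_linkage n d M \<longleftrightarrow>
     (\<forall>I J. I \<subseteq> {1..n} \<and> J \<subseteq> {1..d} \<and> card I = card J + 1 \<longrightarrow>
        (let G = \<Union>{M I' J | I'. I' \<subseteq> I \<and> card I' = card J}
         in bip_spanning_tree I J G \<and> right_deg2 J G))"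

definition matching_left_semi_ensemble ::
  "nat \<Rightarrow> nat \<Rightarrow> (nat set \<Rightarrow> nat set \<Rightarrow> (nat \<times> nat) set) \<Rightarrow> bool" where
  "matching_left_semi_ensemble n d M \<longleftrightarrow>
     matching_stack n d M \<and> stack_closure n d M \<and> stack_left_linkage n d M"

text \<open>Reduction: M_{I,J} is M_sigma restricted to sigma \<inter> [n], where
  sigma = I \<union> underline([d] - J) (the unique d-subset with sigma \<inter> [n] = I and
  [bar d] - bar sigma = J).\<close>
definition reduction ::
  "nat \<Rightarrow> nat \<Rightarrow> ((nat + nat) set \<Rightarrow> ((nat + nat) \<times> nat) set)
     \<Rightarrow> (nat set \<Rightarrow> nat set \<Rightarrow> (nat \<times> nat) set)" where
  "reduction n d M = (\<lambda>I J.
     if I \<subseteq> {1..n} \<and> J \<subseteq> {1..d} \<and> card I = card J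
     then {(i, j). (Inl i, j) \<in> M (Inl ` I \<union> Inr ` ({1..d} - J))}
     else {})"

end

theory Submission
  imports Defs
begin
lemma bip_adj_sym: "bip_adj E u v \<Longrightarrow> bip_adj E v u"
  unfolding bip_adj_def by blast

lemma bip_adj_mono: "bip_adj E u v \<Longrightarrow> E \<subseteq> E' \<Longrightarrow> bip_adj E' u v"
  unfolding bip_adj_def by blast

lemma bip_adj_irrefl: "\<not> bip_adj E u u"
  unfolding bip_adj_def by blast

lemma bip_adj_LR: "bip_adj E (Inl a) (Inr b) \<longleftrightarrow> (a, b) \<in> E"
  unfolding bip_adj_def by blast
lemma bip_adj_RL: "bip_adj E (Inr b) (Inl a) \<longleftrightarrow> (a, b) \<in> E"
  unfolding bip_adj_def by blast
lemma bip_adj_LL: "\<not> bip_adj E (Inl a) (Inl a')"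
  unfolding bip_adj_def by blast
lemma bip_adj_RR: "\<not> bip_adj E (Inr a) (Inr a')"
  unfolding bip_adj_def by blast

lemma rtr_sym:
  assumes "(x, y) \<in> {(x, y). bip_adj E x y}\<^sup>*"
  shows "(y, x) \<in> {(x, y). bip_adj E x y}\<^sup>*"
proof -
  have "sym {(x, y). bip_adj E x y}" by (auto simp: sym_def intro: bip_adj_sym)
  then have "sym ({(x, y). bip_adj E x y}\<^sup>*)" by (rule sym_rtrancl)
  then show ?thesis using assms by (auto dest: symD)
qed

lemma rtr_hom:
  assumes "(u, v) \<in> {(x, y). bip_adj E x y}\<^sup>*"
    and "\<And>x y. bip_adj E x y \<Longrightarrow> f x = f y \<or> bip_adj E' (f x) (f y)"
  shows "(f u, f v) \<in> {(x, y). bip_adj E' x y}\<^sup>*"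
  using assms(1)
proof (induction rule: rtrancl_induct)
  case base then show ?case by simp
next
  case (step y z)
  then have "f y = f z \<or> bip_adj E' (f y) (f z)" using assms(2) by simp
  then show ?case using step.IH
    by (metis (no_types, lifting) case_prodI mem_Collect_eq rtrancl.rtrancl_into_rtrancl)
qed

lemma cycle_map:
  assumes "bip_cycle E vs" "inj_on f (set vs)"
    and "\<And>x y. x \<in> set vs \<Longrightarrow> y \<in> set vs \<Longrightarrow> bip_adj E x y \<Longrightarrow> bip_adj E' (f x) (f y)"
  shows "bip_cycle E' (map f vs)"
  unfolding bip_cycle_def
proof (intro conjI allI impI)
  show "3 \<le> length (map f vs)" "distinct (map f vs)" using assms unfolding bip_cycle_def
    by (auto simp: distinct_map)
  fix i assume i: "i < length (map f vs)"
  have L: "0 < length vs" using i by auto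
  have "(i + 1) mod length vs < length vs" using L by simp
  then show "bip_adj E' (map f vs ! i) (map f vs ! ((i + 1) mod length (map f vs)))"
    using assms i unfolding bip_cycle_def by (auto intro!: assms(3))
qed

lemma cycle_nbrs:
  assumes "bip_cycle E vs" "p < length vs"
  shows "\<exists>x y. x \<noteq> y \<and> x \<in> set vs \<and> y \<in> set vs \<and> bip_adj E (vs ! p) x \<and> bip_adj E (vs ! p) y"
proof -
  let ?L = "length vs"
  have L: "3 \<le> ?L" "distinct vs" and adj: "\<And>i. i < ?L \<Longrightarrow> bip_adj E (vs ! i) (vs ! ((i + 1) mod ?L))"
    using assms unfolding bip_cycle_def by auto
  define q where "q = (if p = 0 then ?L - 1 else p - 1)"
  define r where "r = (if p + 1 = ?L then 0 else p + 1)"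
  have q: "q < ?L" "(q + 1) mod ?L = p" unfolding q_def using L assms(2) by auto
  have r: "r < ?L" "(p + 1) mod ?L = r" unfolding r_def using L assms(2) by auto
  have a1: "bip_adj E (vs ! p) (vs ! q)" using adj[OF q(1)] q(2) bip_adj_sym by metis
  have a2: "bip_adj E (vs ! p) (vs ! r)" using adj assms(2) r by metis
  have "r \<noteq> q" unfolding r_def q_def using L assms(2) by auto
  then have "vs ! r \<noteq> vs ! q"
    using L q r by (simp add: nth_eq_iff_index_eq)
  then show ?thesis using a1 a2 q r by (metis nth_mem)
qed

definition is_path :: "('v \<Rightarrow> 'v \<Rightarrow> bool) \<Rightarrow> 'v set \<Rightarrow> 'v list \<Rightarrow> bool" where
  "is_path R V xs \<longleftrightarrow> set xs \<subseteq> V \<and> distinct xs \<and> xs \<noteq> [] \<and>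
     (\<forall>i. i + 1 < length xs \<longrightarrow> R (xs ! i) (xs ! (i + 1)))"

lemma cycle_exists:
  fixes R :: "'v \<Rightarrow> 'v \<Rightarrow> bool"
  assumes fin: "finite V" and ne: "V \<noteq> {}"
    and deg: "\<And>v. v \<in> V \<Longrightarrow> \<exists>w1 w2. w1 \<noteq> w2 \<and> w1 \<in> V \<and> w2 \<in> V \<and> R v w1 \<and> R v w2"
    and irr: "\<And>v. \<not> R v v" and sym: "\<And>u v. R u v \<Longrightarrow> R v u"
  shows "\<exists>vs. 3 \<le> length vs \<and> distinct vs \<and> (\<forall>i < length vs. R (vs ! i) (vs ! ((i + 1) mod length vs)))"
proof -
  obtain v0 where "v0 \<in> V" using ne by auto
  then have p0: "is_path R V [v0]" unfolding is_path_def by auto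
  have bnd: "\<And>xs. is_path R V xs \<Longrightarrow> length xs < card V + 1"
    unfolding is_path_def using fin by (metis card_mono distinct_card less_Suc_eq_le Suc_eq_plus1)
  obtain xs where px: "is_path R V xs" and mx: "\<And>ys. is_path R V ys \<Longrightarrow> length ys \<le> length xs"
    using ex_has_greatest_nat[of "is_path R V" "[v0]" length "card V + 1", OF p0] bnd by blast
  have xsV: "set xs \<subseteq> V" and dxs: "distinct xs" and nxs: "xs \<noteq> []"
    and cxs: "\<And>i. i + 1 < length xs \<Longrightarrow> R (xs ! i) (xs ! (i + 1))"
    using px unfolding is_path_def by auto
  let ?v = "xs ! 0"
  have vV: "?v \<in> V" using xsV nxs by (simp add: subset_iff)
  have inxs: "w \<in> set xs" if "w \<in> V" "R ?v w" for w
  proof (rule ccontr)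
    assume "w \<notin> set xs"
    have "is_path R V (w # xs)"
      unfolding is_path_def
    proof (intro conjI allI impI)
      show "set (w # xs) \<subseteq> V" using xsV that by auto
      show "distinct (w # xs)" using dxs \<open>w \<notin> set xs\<close> by auto
      show "w # xs \<noteq> []" by simp
      fix i assume i: "i + 1 < length (w # xs)"
      show "R ((w # xs) ! i) ((w # xs) ! (i + 1))"
      proof (cases i)
        case 0 then show ?thesis using sym[OF that(2)] by simp
      next
        case (Suc j) then show ?thesis using cxs[of j] i by simp
      qed
    qed
    then show False using mx by fastforce
  qed
  obtain w1 w2 where w: "w1 \<noteq> w2" "w1 \<in> V" "w2 \<in> V" "R ?v w1" "R ?v w2" using deg[OF vV] by blast
  have "\<exists>w. w \<in> set xs \<and> R ?v w \<and> (length xs < 2 \<or> w \<noteq> xs ! 1)"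
    using w inxs by metis
  then obtain w where ww: "w \<in> set xs" "R ?v w" "length xs < 2 \<or> w \<noteq> xs ! 1" by blast
  obtain m where m: "m < length xs" "xs ! m = w" using ww(1) by (metis in_set_conv_nth)
  have "m \<noteq> 0" by (metis irr ww(2) m(2))
  have "m \<noteq> 1" using ww(3) m by auto
  then have m2: "2 \<le> m" using \<open>m \<noteq> 0\<close> by simp
  define vs where "vs = take (m + 1) xs"
  have lv: "length vs = m + 1" unfolding vs_def using m by simp
  have nth: "\<And>i. i \<le> m \<Longrightarrow> vs ! i = xs ! i" unfolding vs_def by simp
  show ?thesis
  proof (intro exI conjI allI impI)
    show "3 \<le> length vs" using lv m2 by simp
    show "distinct vs" unfolding vs_def using dxs by simp
    fix i assume i: "i < length vs"
    show "R (vs ! i) (vs ! ((i + 1) mod length vs))"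
    proof (cases "i = m")
      case True
      then show ?thesis using lv nth[of 0] nth[of m] m sym[OF ww(2)] by simp
    next
      case False
      then have "i < m" using i lv by simp
      then show ?thesis using lv nth[of i] nth[of "i+1"] cxs[of i] m by simp
    qed
  qed
qed

lemma pm_mem: "is_pm A B P \<Longrightarrow> (a, b) \<in> P \<Longrightarrow> a \<in> A \<and> b \<in> B"
  unfolding is_pm_def by blast

lemma pm_left: "is_pm A B P \<Longrightarrow> (a, b) \<in> P \<Longrightarrow> (a, b') \<in> P \<Longrightarrow> b = b'"
  unfolding is_pm_def by blast

lemma pm_right: "is_pm A B P \<Longrightarrow> (a, b) \<in> P \<Longrightarrow> (a', b) \<in> P \<Longrightarrow> a = a'"
  unfolding is_pm_def by blast

lemma pm_exL: "is_pm A B P \<Longrightarrow> a \<in> A \<Longrightarrow> \<exists>b. (a, b) \<in> P"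
  unfolding is_pm_def by blast

lemma pm_exR: "is_pm A B P \<Longrightarrow> b \<in> B \<Longrightarrow> \<exists>a. (a, b) \<in> P"
  unfolding is_pm_def by blast

lemma pm_card:
  assumes "is_pm A B N"
  shows "card A = card B" "finite A \<Longrightarrow> finite B"
proof -
  have "bij_betw fst N A"
    unfolding bij_betw_def inj_on_def using assms unfolding is_pm_def by force
  moreover have "bij_betw snd N B"
    unfolding bij_betw_def inj_on_def using assms unfolding is_pm_def by force
  ultimately show "card A = card B" "finite A \<Longrightarrow> finite B"
    by (metis bij_betw_same_card, metis bij_betw_finite)
qed

lemma pm_sub_eq:
  assumes "is_pm A B P" "is_pm A B Q" "P \<subseteq> Q" shows "P = Q"
proof
  show "Q \<subseteq> P"
  proof
    fix x assume "x \<in> Q"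
    then obtain a b where x: "x = (a, b)" "(a, b) \<in> Q" by (cases x) auto
    then have "a \<in> A" using pm_mem assms(2) by metis
    then obtain b' where "(a, b') \<in> P" using pm_exL assms(1) by metis
    then have "(a, b') \<in> Q" using assms(3) by auto
    then have "b' = b" using pm_left[OF assms(2)] x by metis
    then show "x \<in> P" using x \<open>(a, b') \<in> P\<close> by simp
  qed
qed (rule assms(3))

lemma pm_unique_acyclic:
  assumes P: "is_pm A B P" and Q: "is_pm A B Q" and fA: "finite A" and fB: "finite B"
    and sub: "P \<union> Q \<subseteq> E" and acyc: "\<not> (\<exists>vs. bip_cycle E vs)"
  shows "P = Q"
proof (rule ccontr)
  assume neq: "P \<noteq> Q"
  define D where "D = (P - Q) \<union> (Q - P)"
  define V where "V = {v. \<exists>w. bip_adj D v w}"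
  have DAB: "D \<subseteq> A \<times> B" unfolding D_def using P Q unfolding is_pm_def by auto
  have VAB: "V \<subseteq> Inl ` A \<union> Inr ` B"
    unfolding V_def bip_adj_def using DAB by blast
  have finV: "finite V" using VAB fA fB finite_subset by blast
  obtain x where "x \<in> D" unfolding D_def using neq by blast
  then obtain a b where "(a, b) \<in> D" by (cases x) auto
  then have "Inl a \<in> V" unfolding V_def bip_adj_def by blast
  then have neV: "V \<noteq> {}" by auto
  have clos: "\<And>v w. bip_adj D v w \<Longrightarrow> w \<in> V"
    unfolding V_def using bip_adj_sym by blast
  have Lcase: "\<exists>b'. b' \<noteq> b \<and> (a, b') \<in> D"
    if "(a, b) \<in> D" for a b
  proof -
    have aA: "a \<in> A" using that DAB by auto
    show ?thesis
    proof (cases "(a, b) \<in> P")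
      case True
      then have "(a, b) \<notin> Q" using that unfolding D_def by auto
      obtain b' where "(a, b') \<in> Q" using pm_exL[OF Q aA] by blast
      moreover have "(a, b') \<notin> P" using pm_left[OF P True] \<open>(a, b) \<notin> Q\<close> calculation by metis
      ultimately show ?thesis unfolding D_def using \<open>(a, b) \<notin> Q\<close> by auto
    next
      case False
      then have "(a, b) \<in> Q" using that unfolding D_def by auto
      obtain b' where "(a, b') \<in> P" using pm_exL[OF P aA] by blast
      moreover have "(a, b') \<notin> Q" using pm_left[OF Q \<open>(a, b) \<in> Q\<close>] False calculation by metis
      ultimately show ?thesis unfolding D_def using False by auto
    qed
  qed
  have Rcase: "\<exists>a'. a' \<noteq> a \<and> (a', b) \<in> D"
    if "(a, b) \<in> D" for a b
  proof -
    have bB: "b \<in> B" using that DAB by auto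
    show ?thesis
    proof (cases "(a, b) \<in> P")
      case True
      then have "(a, b) \<notin> Q" using that unfolding D_def by auto
      obtain a' where "(a', b) \<in> Q" using pm_exR[OF Q bB] by blast
      moreover have "(a', b) \<notin> P" using pm_right[OF P True] \<open>(a, b) \<notin> Q\<close> calculation by metis
      ultimately show ?thesis unfolding D_def using \<open>(a, b) \<notin> Q\<close> by auto
    next
      case False
      then have "(a, b) \<in> Q" using that unfolding D_def by auto
      obtain a' where "(a', b) \<in> P" using pm_exR[OF P bB] by blast
      moreover have "(a', b) \<notin> Q" using pm_right[OF Q \<open>(a, b) \<in> Q\<close>] False calculation by metis
      ultimately show ?thesis unfolding D_def using False by auto
    qed
  qed
  have deg: "\<exists>w1 w2. w1 \<noteq> w2 \<and> w1 \<in> V \<and> w2 \<in> V \<and> bip_adj D v w1 \<and> bip_adj D v w2"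
    if vV: "v \<in> V" for v
  proof -
    obtain w where w: "bip_adj D v w" using vV unfolding V_def by blast
    then obtain a b where ab: "(a, b) \<in> D" "(v = Inl a \<and> w = Inr b) \<or> (v = Inr b \<and> w = Inl a)"
      unfolding bip_adj_def by blast
    show ?thesis
    proof (cases "v = Inl a \<and> w = Inr b")
      case True
      obtain b' where "b' \<noteq> b" "(a, b') \<in> D" using Lcase[OF ab(1)] by blast
      then have "bip_adj D v (Inr b')" "bip_adj D v (Inr b)" using True ab(1) bip_adj_LR by metis+
      then show ?thesis using clos \<open>b' \<noteq> b\<close> by blast
    next
      case False
      then have vv: "v = Inr b" using ab(2) by blast
      obtain a' where "a' \<noteq> a" "(a', b) \<in> D" using Rcase[OF ab(1)] by blast
      then have "bip_adj D v (Inl a')" "bip_adj D v (Inl a)" using vv ab(1) bip_adj_RL by metis+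
      then show ?thesis using clos \<open>a' \<noteq> a\<close> by blast
    qed
  qed
  obtain vs where "3 \<le> length vs \<and> distinct vs \<and> (\<forall>i < length vs. bip_adj D (vs ! i) (vs ! ((i + 1) mod length vs)))"
    using cycle_exists[of V "bip_adj D", OF finV neV deg bip_adj_irrefl bip_adj_sym] by blast
  then have "bip_cycle E vs" unfolding bip_cycle_def
    using bip_adj_mono[of D _ _ E] sub unfolding D_def by blast
  then show False using acyc by blast
qed

lemma pm_remove:
  assumes "is_pm A B P" "(a, b) \<in> P"
  shows "is_pm (A - {a}) (B - {b}) (P - {(a, b)})"
proof -
  have ab: "a \<in> A" "b \<in> B" using pm_mem[OF assms] by auto
  have L: "\<And>x y. (x, y) \<in> P \<Longrightarrow> x = a \<Longrightarrow> y = b" using pm_left[OF assms(1) assms(2)] by metis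
  have R: "\<And>x y. (x, y) \<in> P \<Longrightarrow> y = b \<Longrightarrow> x = a" using pm_right[OF assms(1) assms(2)] by metis
  show ?thesis unfolding is_pm_def
  proof (intro conjI ballI)
    show "P - {(a, b)} \<subseteq> (A - {a}) \<times> (B - {b})"
      using L R pm_mem[OF assms(1)] by fast
    fix x assume "x \<in> A - {a}"
    then obtain y where "(x, y) \<in> P" using pm_exL[OF assms(1)] by blast
    then show "\<exists>!y. (x, y) \<in> P - {(a, b)}" using pm_left[OF assms(1)] \<open>x \<in> A - {a}\<close> by blast
  next
    fix y assume "y \<in> B - {b}"
    then obtain x where "(x, y) \<in> P" using pm_exR[OF assms(1)] by blast
    then show "\<exists>!x. (x, y) \<in> P - {(a, b)}" using pm_right[OF assms(1)] \<open>y \<in> B - {b}\<close> by blast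
  qed
qed

definition Wt :: "(nat set \<Rightarrow> nat set \<Rightarrow> (nat \<times> nat) set) \<Rightarrow> nat set \<Rightarrow> nat set \<Rightarrow> (nat \<times> nat) set" where
  "Wt S I J = (\<Union>i\<in>I. S (I - {i}) J)"

definition Ut :: "nat \<Rightarrow> (nat set \<Rightarrow> nat set \<Rightarrow> (nat \<times> nat) set) \<Rightarrow> nat set \<Rightarrow> nat set \<Rightarrow> (nat \<times> nat) set" where
  "Ut d S I J = Wt S I J \<union> (\<Union>k\<in>{1..d} - J. S I (insert k J))"

definition Gt :: "nat \<Rightarrow> (nat set \<Rightarrow> nat set \<Rightarrow> (nat \<times> nat) set) \<Rightarrow> nat set \<Rightarrow> nat set \<Rightarrow> ((nat + nat) \<times> nat) set" where
  "Gt d S I J = {(Inl i, j) | i j. (i, j) \<in> Ut d S I J} \<union> {(Inr k, k) | k. k \<in> {1..d} - J}"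

definition tau :: "nat \<Rightarrow> nat set \<Rightarrow> nat set \<Rightarrow> (nat + nat) set" where
  "tau d I J = Inl ` I \<union> Inr ` ({1..d} - J)"

definition gmap :: "nat + nat \<Rightarrow> (nat + nat) + nat" where
  "gmap x = (case x of Inl i \<Rightarrow> Inl (Inl i) | Inr j \<Rightarrow> Inr j)"

lemma gmap_simps[simp]: "gmap (Inl i) = Inl (Inl i)" "gmap (Inr j) = Inr j"
  unfolding gmap_def by simp_all

lemma inj_gmap: "inj gmap"
  unfolding inj_def gmap_def by (auto split: sum.splits)

lemma stack_pm:
  "matching_stack n d S \<Longrightarrow> I \<subseteq> {1..n} \<Longrightarrow> J \<subseteq> {1..d} \<Longrightarrow> card I = card J \<Longrightarrow> is_pm I J (S I J)"
  unfolding matching_stack_def by metis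

lemma stack_empty:
  "matching_stack n d S \<Longrightarrow> \<not> (I \<subseteq> {1..n} \<and> J \<subseteq> {1..d} \<and> card I = card J) \<Longrightarrow> S I J = {}"
  unfolding matching_stack_def by metis

context
  fixes n d :: nat and S :: "nat set \<Rightarrow> nat set \<Rightarrow> (nat \<times> nat) set" and I J :: "nat set"
  assumes stack: "matching_stack n d S"
    and IS: "I \<subseteq> {1..n}" and JS: "J \<subseteq> {1..d}" and cIJ: "card I = card J + 1"
begin

lemma finI: "finite I" using IS finite_subset by blast
lemma finJ: "finite J" using JS finite_subset by blast
lemma Ine: "I \<noteq> {}" using cIJ by auto

lemma pmW: "i \<in> I \<Longrightarrow> is_pm (I - {i}) J (S (I - {i}) J)"
  by (rule stack_pm[OF stack]) (use IS JS cIJ finI in auto)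

lemma pmK: "k \<in> {1..d} - J \<Longrightarrow> is_pm I (insert k J) (S I (insert k J))"
  by (rule stack_pm[OF stack]) (use IS JS cIJ finJ in auto)

lemma Wt_sub: "Wt S I J \<subseteq> I \<times> J"
  unfolding Wt_def using pmW unfolding is_pm_def by blast

lemma Ut_sub: "Ut d S I J \<subseteq> I \<times> {1..d}"
  unfolding Ut_def using Wt_sub pmK JS unfolding is_pm_def by blast

definition pk :: "nat \<Rightarrow> nat" where "pk k = (THE i. (i, k) \<in> S I (insert k J))"

lemma pk: "k \<in> {1..d} - J \<Longrightarrow> (pk k, k) \<in> S I (insert k J)"
  and pk_uniq: "k \<in> {1..d} - J \<Longrightarrow> (i, k) \<in> S I (insert k J) \<Longrightarrow> i = pk k"
proof -
  assume k: "k \<in> {1..d} - J"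
  have "\<exists>!i. (i, k) \<in> S I (insert k J)" using pmK[OF k] unfolding is_pm_def by blast
  then show "(pk k, k) \<in> S I (insert k J)" unfolding pk_def by (rule theI')
  show "(i, k) \<in> S I (insert k J) \<Longrightarrow> i = pk k"
    using \<open>\<exists>!i. _\<close> \<open>(pk k, k) \<in> S I (insert k J)\<close> by blast
qed

lemma pk_in: "k \<in> {1..d} - J \<Longrightarrow> pk k \<in> I"
  using pk pmK unfolding is_pm_def by blast

lemma Ut_outJ: "(i, b) \<in> Ut d S I J \<Longrightarrow> b \<notin> J \<Longrightarrow> b \<in> {1..d} - J \<and> i = pk b"
proof -
  assume h: "(i, b) \<in> Ut d S I J" "b \<notin> J"
  then have "(i, b) \<notin> Wt S I J" using Wt_sub by auto
  then obtain k where k: "k \<in> {1..d} - J" "(i, b) \<in> S I (insert k J)" using h unfolding Ut_def by blast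
  then have "b = k" using pmK[OF k(1)] h(2) unfolding is_pm_def by blast
  then show ?thesis using k pk_uniq by blast
qed

lemma W2: "j \<in> J \<Longrightarrow> \<exists>i1 i2. i1 \<noteq> i2 \<and> (i1, j) \<in> Wt S I J \<and> (i2, j) \<in> Wt S I J"
proof -
  assume j: "j \<in> J"
  obtain i0 where i0: "i0 \<in> I" using Ine by auto
  obtain i1 where i1: "(i1, j) \<in> S (I - {i0}) J" using pm_exR[OF pmW[OF i0] j] by blast
  then have i1I: "i1 \<in> I - {i0}" using pm_mem[OF pmW[OF i0]] by blast
  obtain i2 where i2: "(i2, j) \<in> S (I - {i1}) J" using pm_exR[OF pmW, of i1 j] i1I j by blast
  then have "i2 \<in> I - {i1}" using pm_mem[OF pmW, of i1] i1I by blast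
  then show ?thesis using i1 i2 i0 i1I unfolding Wt_def by blast
qed

lemma tree_to_left:
  assumes tree: "bip_spanning_tree (tau d I J) {1..d} (Gt d S I J)"
    and deg: "right_deg2 {1..d} (Gt d S I J)"
  shows "\<forall>i j. (i, j) \<in> Ut d S I J \<longrightarrow> j \<in> J \<longrightarrow> (i, j) \<in> Wt S I J"
    and "bip_spanning_tree I J (Wt S I J)" and "right_deg2 J (Wt S I J)"
proof -
  have WU: "Wt S I J \<subseteq> Ut d S I J" unfolding Ut_def by blast
  have Gpart: "{a. (a, j) \<in> Gt d S I J} = Inl ` {i. (i, j) \<in> Ut d S I J}" if "j \<in> J" for j
    unfolding Gt_def using that by auto
  have c2: "card {i. (i, j) \<in> Ut d S I J} = 2" if "j \<in> J" for j
  proof -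
    have "card {a. (a, j) \<in> Gt d S I J} = 2" using deg that JS unfolding right_deg2_def by auto
    then show ?thesis using Gpart[OF that] by (simp add: card_image)
  qed
  have UW: "{i. (i, j) \<in> Ut d S I J} = {i. (i, j) \<in> Wt S I J}" if j: "j \<in> J" for j
  proof -
    obtain i1 i2 where i: "i1 \<noteq> i2" "(i1, j) \<in> Wt S I J" "(i2, j) \<in> Wt S I J" using W2[OF j] by blast
    have fin: "finite {i. (i, j) \<in> Ut d S I J}" using c2[OF j] by (metis card.infinite zero_neq_numeral)
    have sub: "{i1, i2} \<subseteq> {i. (i, j) \<in> Ut d S I J}" using i WU by auto
    have "{i1, i2} = {i. (i, j) \<in> Ut d S I J}"
      using card_subset_eq[OF fin sub] c2[OF j] i(1) by simp
    then show ?thesis using i WU by auto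
  qed
  show UWall: "\<forall>i j. (i, j) \<in> Ut d S I J \<longrightarrow> j \<in> J \<longrightarrow> (i, j) \<in> Wt S I J"
    using UW by blast
  show "right_deg2 J (Wt S I J)" unfolding right_deg2_def using UW c2 by simp
  have treeG: "\<forall>u \<in> tau d I J <+> {1..d}. \<forall>v \<in> tau d I J <+> {1..d}. (u, v) \<in> {(x, y). bip_adj (Gt d S I J) x y}\<^sup>*"
    and acycG: "\<not> (\<exists>vs. bip_cycle (Gt d S I J) vs)"
    using tree unfolding bip_spanning_tree_def by auto
  define f where "f = (\<lambda>x::(nat + nat) + nat. case x of Inl (Inl i) \<Rightarrow> Inl i | Inl (Inr k) \<Rightarrow> Inl (pk k)
     | Inr j \<Rightarrow> (if j \<in> J then Inr j else Inl (pk j)))"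
  have hom1: "f (Inl a) = f (Inr b) \<or> bip_adj (Wt S I J) (f (Inl a)) (f (Inr b))"
    if ab: "(a, b) \<in> Gt d S I J" for a b
  proof -
    consider (A) i where "a = Inl i" "(i, b) \<in> Ut d S I J" | (B) "a = Inr b" "b \<in> {1..d} - J"
      using ab unfolding Gt_def by blast
    then show ?thesis
    proof cases
      case A
      show ?thesis
      proof (cases "b \<in> J")
        case True
        then have "(i, b) \<in> Wt S I J" using UWall A by blast
        then show ?thesis using A True unfolding f_def by (simp add: bip_adj_LR)
      next
        case False
        then show ?thesis using Ut_outJ[OF A(2) False] A unfolding f_def by simp
      qed
    next
      case B then show ?thesis unfolding f_def by simp
    qed
  qed
  have hom: "f x = f y \<or> bip_adj (Wt S I J) (f x) (f y)" if "bip_adj (Gt d S I J) x y" for x y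
    using that hom1 unfolding bip_adj_def[of "Gt d S I J"] by (metis bip_adj_sym)
  have fg: "f (gmap u) = u" if "u \<in> I <+> J" for u
    using that unfolding f_def by auto
  have gin: "gmap u \<in> tau d I J <+> {1..d}" if "u \<in> I <+> J" for u
    using that JS unfolding tau_def by auto
  have conn: "(u, v) \<in> {(x, y). bip_adj (Wt S I J) x y}\<^sup>*" if "u \<in> I <+> J" "v \<in> I <+> J" for u v
    using rtr_hom[of "gmap u" "gmap v" "Gt d S I J" f "Wt S I J", OF treeG[rule_format, OF gin gin] hom]
      that fg by simp
  have acyc: "\<not> (\<exists>vs. bip_cycle (Wt S I J) vs)"
  proof
    assume "\<exists>vs. bip_cycle (Wt S I J) vs"
    then obtain vs where vs: "bip_cycle (Wt S I J) vs" by blast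
    have "bip_cycle (Gt d S I J) (map gmap vs)"
    proof (rule cycle_map[OF vs])
      show "inj_on gmap (set vs)" using inj_gmap by (simp add: inj_on_def inj_def)
      fix x y assume "bip_adj (Wt S I J) x y"
      then obtain a b where "(a, b) \<in> Wt S I J" "(x = Inl a \<and> y = Inr b) \<or> (x = Inr b \<and> y = Inl a)"
        unfolding bip_adj_def by blast
      moreover then have "(Inl a, b) \<in> Gt d S I J" using WU unfolding Gt_def by blast
      ultimately show "bip_adj (Gt d S I J) (gmap x) (gmap y)" unfolding bip_adj_def by auto
    qed
    then show False using acycG by blast
  qed
  show "bip_spanning_tree I J (Wt S I J)"
    unfolding bip_spanning_tree_def using Wt_sub conn acyc by blast
qed

lemma gmap_hom_W: "bip_adj (Wt S I J) x y \<Longrightarrow> bip_adj (Gt d S I J) (gmap x) (gmap y)"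
proof -
  assume "bip_adj (Wt S I J) x y"
  then obtain a b where "(a, b) \<in> Wt S I J" "(x = Inl a \<and> y = Inr b) \<or> (x = Inr b \<and> y = Inl a)"
    unfolding bip_adj_def by blast
  moreover then have "(a, b) \<in> Ut d S I J" unfolding Ut_def by simp
  then have "(Inl a, b) \<in> Gt d S I J" unfolding Gt_def by simp
  ultimately show "bip_adj (Gt d S I J) (gmap x) (gmap y)" unfolding bip_adj_def by auto
qed

lemma left_to_tree:
  assumes clos: "stack_closure n d S"
    and treeW: "bip_spanning_tree I J (Wt S I J)" and degW: "right_deg2 J (Wt S I J)"
  shows "bip_spanning_tree (tau d I J) {1..d} (Gt d S I J)" and "right_deg2 {1..d} (Gt d S I J)"
proof -
  have Sk: "S (I - {pk k}) J = S I (insert k J) - {(pk k, k)}" if k: "k \<in> {1..d} - J" for k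
  proof -
    have N: "is_pm (I - {pk k}) J (S I (insert k J) - {(pk k, k)})"
      using pm_remove[OF pmK[OF k] pk[OF k]] k by simp
    have "card I = card (insert k J)" using k cIJ finJ by simp
    then have "S (I - {pk k}) J \<subseteq> S I (insert k J)"
      using clos[unfolded stack_closure_def, rule_format, of I "insert k J" "I - {pk k}" J] N IS JS k
      by auto
    moreover have "S (I - {pk k}) J \<subseteq> (I - {pk k}) \<times> J" using pmW[OF pk_in[OF k]] unfolding is_pm_def by blast
    ultimately have "S (I - {pk k}) J \<subseteq> S I (insert k J) - {(pk k, k)}" by blast
    then show ?thesis using pm_sub_eq[OF pmW[OF pk_in[OF k]] N] by blast
  qed
  have Ueq: "Ut d S I J = Wt S I J \<union> {(pk k, k) | k. k \<in> {1..d} - J}"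
  proof
    show "Ut d S I J \<subseteq> Wt S I J \<union> {(pk k, k) | k. k \<in> {1..d} - J}"
    proof
      fix x assume x: "x \<in> Ut d S I J"
      show "x \<in> Wt S I J \<union> {(pk k, k) | k. k \<in> {1..d} - J}"
      proof (cases "x \<in> Wt S I J")
        case False
        then obtain k where k: "k \<in> {1..d} - J" "x \<in> S I (insert k J)" using x unfolding Ut_def by blast
        show ?thesis
        proof (cases "x = (pk k, k)")
          case False
          then have "x \<in> S (I - {pk k}) J" using Sk[OF k(1)] k(2) by blast
          then have "x \<in> Wt S I J" unfolding Wt_def using pk_in[OF k(1)] by blast
          then show ?thesis by blast
        qed (use k in blast)
      qed simp
    qed
    show "Wt S I J \<union> {(pk k, k) | k. k \<in> {1..d} - J} \<subseteq> Ut d S I J"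
      unfolding Ut_def using pk by blast
  qed
  have UJ: "(i, j) \<in> Wt S I J" if "(i, j) \<in> Ut d S I J" "j \<in> J" for i j
    using that Ueq by auto
  have connW: "\<forall>u \<in> I <+> J. \<forall>v \<in> I <+> J. (u, v) \<in> {(x, y). bip_adj (Wt S I J) x y}\<^sup>*"
    and acycW: "\<not> (\<exists>vs. bip_cycle (Wt S I J) vs)"
    using treeW unfolding bip_spanning_tree_def by auto
  let ?R = "{(x, y). bip_adj (Gt d S I J) x y}\<^sup>*"
  have lift: "(gmap u, gmap v) \<in> ?R" if "u \<in> I <+> J" "v \<in> I <+> J" for u v
    using rtr_hom[OF connW[rule_format, OF that], of gmap] gmap_hom_W by blast
  have eK: "(Inr k, k) \<in> Gt d S I J" "(Inl (pk k), k) \<in> Gt d S I J" if "k \<in> {1..d} - J" for k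
  proof -
    show "(Inr k, k) \<in> Gt d S I J" using that unfolding Gt_def by simp
    have "(pk k, k) \<in> Ut d S I J" using that Ueq by blast
    then show "(Inl (pk k), k) \<in> Gt d S I J" unfolding Gt_def by simp
  qed
  have reach: "\<exists>y \<in> I <+> J. (x, gmap y) \<in> ?R" if x: "x \<in> tau d I J <+> {1..d}" for x
  proof -
    consider (a) i where "x = Inl (Inl i)" "i \<in> I" | (b) k where "x = Inl (Inr k)" "k \<in> {1..d} - J"
      | (c) j where "x = Inr j" "j \<in> J" | (e) j where "x = Inr j" "j \<in> {1..d} - J"
      using x unfolding tau_def by blast
    then show ?thesis
    proof cases
      case a then show ?thesis by (intro bexI[of _ "Inl i"]) auto
    next
      case b
      have "bip_adj (Gt d S I J) (Inl (Inr k)) (Inr k)" using eK(1)[OF b(2)] bip_adj_LR by metis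
      moreover have "bip_adj (Gt d S I J) (Inr k) (Inl (Inl (pk k)))" using eK(2)[OF b(2)] bip_adj_RL by metis
      ultimately have "(x, gmap (Inl (pk k))) \<in> ?R" using b
        by (simp add: converse_rtrancl_into_rtrancl)
      then show ?thesis using pk_in[OF b(2)] by blast
    next
      case c then show ?thesis by (intro bexI[of _ "Inr j"]) auto
    next
      case e
      have "bip_adj (Gt d S I J) (Inr j) (Inl (Inl (pk j)))" using eK(2)[OF e(2)] bip_adj_RL by metis
      then have "(x, gmap (Inl (pk j))) \<in> ?R" using e by auto
      then show ?thesis using pk_in[OF e(2)] by blast
    qed
  qed
  have conn: "\<forall>u \<in> tau d I J <+> {1..d}. \<forall>v \<in> tau d I J <+> {1..d}. (u, v) \<in> ?R"
  proof (intro ballI)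
    fix u v assume u: "u \<in> tau d I J <+> {1..d}" and v: "v \<in> tau d I J <+> {1..d}"
    obtain y where y: "y \<in> I <+> J" "(u, gmap y) \<in> ?R" using reach[OF u] by blast
    obtain y' where y': "y' \<in> I <+> J" "(v, gmap y') \<in> ?R" using reach[OF v] by blast
    have "(gmap y', v) \<in> ?R" using rtr_sym[OF y'(2)] .
    then show "(u, v) \<in> ?R" using y lift[OF y(1) y'(1)] by (meson rtrancl_trans)
  qed
  have N1: "w = Inr k" if "bip_adj (Gt d S I J) (Inl (Inr k)) w" for k w
    using that unfolding bip_adj_def Gt_def by auto
  have N2: "w = Inl (Inl (pk j)) \<or> w = Inl (Inr j)" if ww: "bip_adj (Gt d S I J) (Inr j) w" and jJ: "j \<notin> J" for j w
  proof -
    obtain a where a: "(a, j) \<in> Gt d S I J" "w = Inl a" using ww unfolding bip_adj_def by blast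
    then consider (x) i where "a = Inl i" "(i, j) \<in> Ut d S I J" | (y) "a = Inr j"
      unfolding Gt_def by blast
    then show ?thesis
    proof cases
      case x then show ?thesis using Ut_outJ[OF x(2) jJ] a by simp
    qed (use a in simp)
  qed
  have acyc: "\<not> (\<exists>vs. bip_cycle (Gt d S I J) vs)"
  proof
    assume "\<exists>vs. bip_cycle (Gt d S I J) vs"
    then obtain vs where vs: "bip_cycle (Gt d S I J) vs" by blast
    have no1: "Inl (Inr k) \<notin> set vs" for k
    proof
      assume "Inl (Inr k) \<in> set vs"
      then obtain p where "p < length vs" "vs ! p = Inl (Inr k)" by (metis in_set_conv_nth)
      then show False using cycle_nbrs[OF vs] N1 by metis
    qed
    have no2: "Inr j \<notin> set vs" if "j \<notin> J" for j
    proof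
      assume "Inr j \<in> set vs"
      then obtain p where p: "p < length vs" "vs ! p = Inr j" by (metis in_set_conv_nth)
      then obtain x y where "x \<noteq> y" "x \<in> set vs" "y \<in> set vs" "bip_adj (Gt d S I J) (Inr j) x"
        "bip_adj (Gt d S I J) (Inr j) y" using cycle_nbrs[OF vs p(1)] by metis
      then show False using N2 that no1 by metis
    qed
    define h where "h = (\<lambda>x::(nat + nat) + nat. case x of Inl (Inl i) \<Rightarrow> Inl i | Inl (Inr k) \<Rightarrow> Inl 0 | Inr j \<Rightarrow> Inr j)"
    have "bip_cycle (Wt S I J) (map h vs)"
    proof (rule cycle_map[OF vs])
      show "inj_on h (set vs)"
      proof (rule inj_onI)
        fix x y assume "x \<in> set vs" "y \<in> set vs" "h x = h y"
        moreover have form: "(\<exists>i. z = Inl (Inl i)) \<or> (\<exists>j. z = Inr j)" if "z \<in> set vs" for z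
          using no1 that by (metis sum.exhaust)
        ultimately show "x = y" unfolding h_def by (metis sum.simps(5,6) sum.inject(1,2) sum.distinct(1))
      qed
      fix x y assume xy: "x \<in> set vs" "y \<in> set vs" "bip_adj (Gt d S I J) x y"
      then obtain a b where ab: "(a, b) \<in> Gt d S I J" "(x = Inl a \<and> y = Inr b) \<or> (x = Inr b \<and> y = Inl a)"
        unfolding bip_adj_def by blast
      have bJ: "b \<in> J" using ab(2) xy no2 by blast
      then obtain i where i: "a = Inl i" "(i, b) \<in> Ut d S I J" using ab(1) unfolding Gt_def by blast
      then have "(i, b) \<in> Wt S I J" using UJ bJ by blast
      then show "bip_adj (Wt S I J) (h x) (h y)" using ab(2) i unfolding h_def bip_adj_def by auto
    qed
    then show False using acycW by blast
  qed
  have GS: "Gt d S I J \<subseteq> tau d I J \<times> {1..d}"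
    unfolding Gt_def tau_def using Ut_sub by blast
  show "bip_spanning_tree (tau d I J) {1..d} (Gt d S I J)"
    unfolding bip_spanning_tree_def using GS conn acyc by blast
  show "right_deg2 {1..d} (Gt d S I J)"
    unfolding right_deg2_def
  proof
    fix j assume j: "j \<in> {1..d}"
    show "card {a. (a, j) \<in> Gt d S I J} = 2"
    proof (cases "j \<in> J")
      case True
      have "{a. (a, j) \<in> Gt d S I J} = Inl ` {i. (i, j) \<in> Wt S I J}"
        unfolding Gt_def using True UJ unfolding Ut_def by auto
      then show ?thesis using degW True unfolding right_deg2_def by (simp add: card_image)
    next
      case False
      have "{a. (a, j) \<in> Gt d S I J} = {Inl (pk j), Inr j}"
      proof
        show "{a. (a, j) \<in> Gt d S I J} \<subseteq> {Inl (pk j), Inr j}"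
        proof
          fix a assume "a \<in> {a. (a, j) \<in> Gt d S I J}"
          then have "(a, j) \<in> Gt d S I J" by simp
          then consider (x) i where "a = Inl i" "(i, j) \<in> Ut d S I J" | (y) "a = Inr j"
            unfolding Gt_def by blast
          then show "a \<in> {Inl (pk j), Inr j}"
          proof cases
            case x then show ?thesis using Ut_outJ[OF x(2) False] by simp
          qed simp
        qed
        have "(pk j, j) \<in> Ut d S I J" using pk[of j] j False unfolding Ut_def by blast
        then show "{Inl (pk j), Inr j} \<subseteq> {a. (a, j) \<in> Gt d S I J}"
          using j False unfolding Gt_def by simp
      qed
      then show ?thesis by simp
    qed
  qed
qed

end

definition LK :: "nat \<Rightarrow> nat \<Rightarrow> (nat set \<Rightarrow> nat set \<Rightarrow> (nat \<times> nat) set) \<Rightarrow> bool" where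
  "LK n d S \<longleftrightarrow> (\<forall>I J. I \<subseteq> {1..n} \<and> J \<subseteq> {1..d} \<and> card I = card J + 1 \<longrightarrow>
     bip_spanning_tree (tau d I J) {1..d} (Gt d S I J) \<and> right_deg2 {1..d} (Gt d S I J))"

lemma sub_minus1:
  assumes "finite A" "B \<subseteq> A" "card B + 1 = card A"
  shows "\<exists>x\<in>A. B = A - {x}"
proof -
  have "card (A - B) = 1" using assms by (simp add: card_Diff_subset finite_subset)
  then obtain x where "A - B = {x}" by (rule card_1_singletonE)
  then show ?thesis using assms(2) by blast
qed

lemma single_step:
  assumes stack: "matching_stack n d S" and lk: "LK n d S"
    and IS: "I \<subseteq> {1..n}" and JS: "J \<subseteq> {1..d}" and c: "card I = card J" and ik: "(i, k) \<in> S I J"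
  shows "S (I - {i}) (J - {k}) = S I J - {(i, k)}"
proof -
  have pm: "is_pm I J (S I J)" using stack_pm[OF stack IS JS c] .
  have iI: "i \<in> I" and kJ: "k \<in> J" using pm_mem[OF pm ik] by auto
  define J' where "J' = J - {k}"
  have finI: "finite I" and finJ: "finite J" using IS JS finite_subset by blast+
  have J'S: "J' \<subseteq> {1..d}" using JS unfolding J'_def by auto
  have cI: "card I = card J' + 1" unfolding J'_def using c kJ finJ
    by (metis One_nat_def Suc_pred add.right_neutral add_Suc_right card_Diff_singleton card_gt_0_iff empty_iff)
  have T: "bip_spanning_tree (tau d I J') {1..d} (Gt d S I J')" "right_deg2 {1..d} (Gt d S I J')"
    using lk IS J'S cI unfolding LK_def by blast+
  note L = tree_to_left[OF stack IS J'S cI T]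
  have kd: "k \<in> {1..d} - J'" using kJ JS unfolding J'_def by auto
  have JJ: "insert k J' = J" unfolding J'_def using kJ by auto
  have SU: "S I J \<subseteq> Ut d S I J'" unfolding Ut_def using kd JJ by blast
  have P: "is_pm (I - {i}) J' (S I J - {(i, k)})" using pm_remove[OF pm ik] unfolding J'_def .
  have PW: "S I J - {(i, k)} \<subseteq> Wt S I J'"
  proof
    fix x assume x: "x \<in> S I J - {(i, k)}"
    then obtain a b where ab: "x = (a, b)" "(a, b) \<in> Ut d S I J'" "b \<in> J'"
      using SU pm_mem[OF P] by (cases x) blast
    then show "x \<in> Wt S I J'" using L(1) by blast
  qed
  have Q: "is_pm (I - {i}) J' (S (I - {i}) J')"
    by (rule stack_pm[OF stack]) (use IS J'S cI finI iI in auto)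
  have QW: "S (I - {i}) J' \<subseteq> Wt S I J'" unfolding Wt_def using iI by blast
  have acyc: "\<not> (\<exists>vs. bip_cycle (Wt S I J') vs)" using L(2) unfolding bip_spanning_tree_def by blast
  have "S (I - {i}) J' = S I J - {(i, k)}"
    using pm_unique_acyclic[OF Q P _ _ _ acyc] finI finJ PW QW unfolding J'_def by blast
  then show ?thesis unfolding J'_def .
qed

lemma closure_ind:
  assumes stack: "matching_stack n d S" and lk: "LK n d S"
  shows "card (I - I') = m \<Longrightarrow> I \<subseteq> {1..n} \<Longrightarrow> J \<subseteq> {1..d} \<Longrightarrow> card I = card J \<Longrightarrow>
    I' \<subseteq> I \<Longrightarrow> J' \<subseteq> J \<Longrightarrow> N \<subseteq> S I J \<Longrightarrow> is_pm I' J' N \<Longrightarrow> S I' J' \<subseteq> S I J"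
proof (induction m arbitrary: I J)
  case 0
  have finI: "finite I" using finite_subset[OF 0(2)] by simp
  have finJ: "finite J" using finite_subset[OF 0(3)] by simp
  have "I - I' = {}" using 0(1) finI by simp
  then have "I' = I" using 0(5) by blast
  have "card J' = card J" using pm_card(1)[OF 0(8)] 0 \<open>I' = I\<close> by simp
  then have "J' = J" using card_subset_eq[OF finJ 0(6)] by simp
  then show ?case using \<open>I' = I\<close> by simp
next
  case (Suc m)
  have finI: "finite I" using finite_subset[OF Suc(3)] by simp
  have finJ: "finite J" using finite_subset[OF Suc(4)] by simp
  have "I - I' \<noteq> {}" using Suc(2) by (metis card.empty nat.distinct(1))
  then obtain i where i: "i \<in> I" "i \<notin> I'" by blast
  have pm: "is_pm I J (S I J)" using stack_pm[OF stack Suc(3-5)] .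
  obtain k where ik: "(i, k) \<in> S I J" using pm_exL[OF pm i(1)] by blast
  have kJ: "k \<in> J" using pm_mem[OF pm ik] by simp
  have kJ': "k \<notin> J'"
  proof
    assume "k \<in> J'"
    then obtain a where "(a, k) \<in> N" using pm_exR[OF Suc(9)] by blast
    moreover then have "a \<in> I'" using pm_mem[OF Suc(9)] by blast
    moreover have "a = i" using pm_right[OF pm ik] calculation(1) Suc(8) by blast
    ultimately show False using i by simp
  qed
  have step: "S (I - {i}) (J - {k}) = S I J - {(i, k)}" using single_step[OF stack lk Suc(3-5) ik] .
  have "(i, k) \<notin> N" using pm_mem[OF Suc(9)] i(2) by blast
  then have N': "N \<subseteq> S (I - {i}) (J - {k})" unfolding step using Suc(8) by blast
  have c': "card (I - {i}) = card (J - {k})" using Suc(5) i kJ finI finJ by simp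
  have eq: "(I - {i}) - I' = (I - I') - {i}" by blast
  have "i \<in> I - I'" using i by blast
  then have m': "card ((I - {i}) - I') = m" unfolding eq using Suc(2) finI by simp
  have "I - {i} \<subseteq> {1..n}" "J - {k} \<subseteq> {1..d}" "I' \<subseteq> I - {i}" "J' \<subseteq> J - {k}"
    using Suc(3,4,6,7) i kJ' by auto
  then have "S I' J' \<subseteq> S (I - {i}) (J - {k})"
    using Suc.IH[OF m' _ _ c' _ _ N' Suc(9)] by blast
  then show ?case using step by auto
qed

lemma Wt_union:
  assumes "finite I" "card I = card J + 1"
  shows "\<Union>{S I' J | I'. I' \<subseteq> I \<and> card I' = card J} = Wt S I J"
proof
  show "\<Union>{S I' J | I'. I' \<subseteq> I \<and> card I' = card J} \<subseteq> Wt S I J"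
  proof
    fix x assume "x \<in> \<Union>{S I' J | I'. I' \<subseteq> I \<and> card I' = card J}"
    then obtain I' where I': "I' \<subseteq> I" "card I' = card J" "x \<in> S I' J" by blast
    then obtain i where "i \<in> I" "I' = I - {i}" using sub_minus1[OF assms(1) I'(1)] assms(2) by auto
    then show "x \<in> Wt S I J" unfolding Wt_def using I' by blast
  qed
  show "Wt S I J \<subseteq> \<Union>{S I' J | I'. I' \<subseteq> I \<and> card I' = card J}"
  proof
    fix x assume "x \<in> Wt S I J"
    then obtain i where i: "i \<in> I" "x \<in> S (I - {i}) J" unfolding Wt_def by blast
    have "card (I - {i}) = card J" using i assms by simp
    then show "x \<in> \<Union>{S I' J | I'. I' \<subseteq> I \<and> card I' = card J}" using i by blast
  qed
qed

lemma LK_iff: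
  assumes stack: "matching_stack n d S"
  shows "LK n d S \<longleftrightarrow> stack_closure n d S \<and> stack_left_linkage n d S"
proof
  assume lk: "LK n d S"
  have "stack_closure n d S" unfolding stack_closure_def
  proof (intro allI impI)
    fix I J I' J' assume a: "I \<subseteq> {1..n} \<and> J \<subseteq> {1..d} \<and> card I = card J \<and> I' \<subseteq> I \<and> J' \<subseteq> J \<and>
      (\<exists>N. N \<subseteq> S I J \<and> is_pm I' J' N)"
    then obtain N where "N \<subseteq> S I J" "is_pm I' J' N" by blast
    moreover have "I \<subseteq> {1..n}" "J \<subseteq> {1..d}" "card I = card J" "I' \<subseteq> I" "J' \<subseteq> J" using a by simp_all
    ultimately show "S I' J' \<subseteq> S I J" by (intro closure_ind[OF stack lk refl])
  qed
  moreover have "stack_left_linkage n d S" unfolding stack_left_linkage_def Let_def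
  proof (intro allI impI)
    fix I J assume h: "I \<subseteq> {1..n} \<and> J \<subseteq> {1..d} \<and> card I = card J + 1"
    then have fin: "finite I" using finite_subset by blast
    have T: "bip_spanning_tree (tau d I J) {1..d} (Gt d S I J)" "right_deg2 {1..d} (Gt d S I J)"
      using lk h unfolding LK_def by blast+
    have L: "bip_spanning_tree I J (Wt S I J)" "right_deg2 J (Wt S I J)"
      using tree_to_left(2,3)[OF stack _ _ _ T] h by blast+
    show "bip_spanning_tree I J (\<Union>{S I' J | I'. I' \<subseteq> I \<and> card I' = card J}) \<and>
          right_deg2 J (\<Union>{S I' J | I'. I' \<subseteq> I \<and> card I' = card J})"
      unfolding Wt_union[OF fin, of J S, OF conjunct2[OF conjunct2[OF h]]] using L by simp
  qed
  ultimately show "stack_closure n d S \<and> stack_left_linkage n d S" by blast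
next
  assume h: "stack_closure n d S \<and> stack_left_linkage n d S"
  show "LK n d S" unfolding LK_def
  proof (intro allI impI)
    fix I J assume dm: "I \<subseteq> {1..n} \<and> J \<subseteq> {1..d} \<and> card I = card J + 1"
    then have fin: "finite I" using finite_subset by blast
    have "bip_spanning_tree I J (\<Union>{S I' J | I'. I' \<subseteq> I \<and> card I' = card J}) \<and>
          right_deg2 J (\<Union>{S I' J | I'. I' \<subseteq> I \<and> card I' = card J})"
      using conjunct2[OF h] dm unfolding stack_left_linkage_def Let_def by blast
    then have W: "bip_spanning_tree I J (Wt S I J)" "right_deg2 J (Wt S I J)"
      unfolding Wt_union[OF fin, of J S, OF conjunct2[OF conjunct2[OF dm]]] by simp_all
    then show "bip_spanning_tree (tau d I J) {1..d} (Gt d S I J) \<and> right_deg2 {1..d} (Gt d S I J)"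
      using left_to_tree[OF stack _ _ _ conjunct1[OF h] W] dm by blast
  qed
qed

definition lft :: "(nat + nat) set \<Rightarrow> nat set" where "lft \<sigma> = {i. Inl i \<in> \<sigma>}"
definition rgt :: "(nat + nat) set \<Rightarrow> nat set" where "rgt \<sigma> = {j. Inr j \<in> \<sigma>}"

definition Mof :: "nat \<Rightarrow> (nat set \<Rightarrow> nat set \<Rightarrow> (nat \<times> nat) set) \<Rightarrow> (nat + nat) set \<Rightarrow> ((nat + nat) \<times> nat) set" where
  "Mof d S \<sigma> = {(Inl i, j) | i j. (i, j) \<in> S (lft \<sigma>) ({1..d} - rgt \<sigma>)} \<union> {(Inr j, j) | j. j \<in> rgt \<sigma>}"

definition Mfull :: "nat \<Rightarrow> nat \<Rightarrow> (nat set \<Rightarrow> nat set \<Rightarrow> (nat \<times> nat) set) \<Rightarrow> (nat + nat) set \<Rightarrow> ((nat + nat) \<times> nat) set" where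
  "Mfull n d S \<sigma> = (if \<sigma> \<subseteq> ground n d \<and> card \<sigma> = d then Mof d S \<sigma> else {})"

lemma fin_iv: "A \<subseteq> {1..(n::nat)} \<Longrightarrow> finite A"
  using finite_subset by blast

lemma card_iv: "A \<subseteq> {1..(d::nat)} \<Longrightarrow> card A \<le> d"
  using card_mono[of "{1..d}" A] by simp

lemma sigma_decomp:
  assumes "\<sigma> \<subseteq> ground n d"
  shows "\<sigma> = Inl ` lft \<sigma> \<union> Inr ` rgt \<sigma>" "lft \<sigma> \<subseteq> {1..n}" "rgt \<sigma> \<subseteq> {1..d}"
    "card \<sigma> = card (lft \<sigma>) + card (rgt \<sigma>)"
proof -
  show e: "\<sigma> = Inl ` lft \<sigma> \<union> Inr ` rgt \<sigma>" unfolding lft_def rgt_def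
  proof
    show "\<sigma> \<subseteq> Inl ` {i. Inl i \<in> \<sigma>} \<union> Inr ` {j. Inr j \<in> \<sigma>}"
    proof
      fix x assume "x \<in> \<sigma>" then show "x \<in> Inl ` {i. Inl i \<in> \<sigma>} \<union> Inr ` {j. Inr j \<in> \<sigma>}"
        by (cases x) auto
    qed
  qed auto
  show l: "lft \<sigma> \<subseteq> {1..n}" and r: "rgt \<sigma> \<subseteq> {1..d}"
    using assms unfolding lft_def rgt_def ground_def by auto
  have "finite (lft \<sigma>)" "finite (rgt \<sigma>)" using fin_iv[OF l] fin_iv[OF r] by auto
  then show "card \<sigma> = card (lft \<sigma>) + card (rgt \<sigma>)"
    using card_Plus[of "lft \<sigma>" "rgt \<sigma>"] e unfolding Plus_def by simp
qed

lemma lft_simp[simp]: "lft (Inl ` A \<union> Inr ` B) = A" unfolding lft_def by auto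
lemma rgt_simp[simp]: "rgt (Inl ` A \<union> Inr ` B) = B" unfolding rgt_def by auto

lemma card_LR: "finite A \<Longrightarrow> finite B \<Longrightarrow> card (Inl ` A \<union> Inr ` B) = card A + card B"
  using card_Plus[of A B] unfolding Plus_def by simp

lemma LR_ground: "A \<subseteq> {1..n} \<Longrightarrow> B \<subseteq> {1..d} \<Longrightarrow> Inl ` A \<union> Inr ` B \<subseteq> ground n d"
  unfolding ground_def by auto

lemma red_eq:
  assumes "I \<subseteq> {1..n}" "J \<subseteq> {1..d}" "card I = card J"
  shows "reduction n d M I J = {(i, j). (Inl i, j) \<in> M (Inl ` I \<union> Inr ` ({1..d} - J))}"
  using assms unfolding reduction_def by simp

lemma pmf_dom:
  assumes "pointed_matching_field n d M" "\<sigma> \<subseteq> ground n d" "card \<sigma> = d"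
  shows "is_pm \<sigma> {1..d} (M \<sigma>)" "\<And>j. Inr j \<in> \<sigma> \<Longrightarrow> (Inr j, j) \<in> M \<sigma>"
proof -
  have "if \<sigma> \<subseteq> ground n d \<and> card \<sigma> = d
           then is_pm \<sigma> {1..d} (M \<sigma>) \<and> (\<forall>j. Inr j \<in> \<sigma> \<longrightarrow> (Inr j, j) \<in> M \<sigma>)
           else M \<sigma> = {}" using assms(1) unfolding pointed_matching_field_def by (rule spec)
  then have "is_pm \<sigma> {1..d} (M \<sigma>) \<and> (\<forall>j. Inr j \<in> \<sigma> \<longrightarrow> (Inr j, j) \<in> M \<sigma>)"
    using if_P[OF conjI[OF assms(2,3)]] by metis
  then show "is_pm \<sigma> {1..d} (M \<sigma>)" "\<And>j. Inr j \<in> \<sigma> \<Longrightarrow> (Inr j, j) \<in> M \<sigma>" by auto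
qed

lemma pmf_out:
  assumes "pointed_matching_field n d M" "\<not> (\<sigma> \<subseteq> ground n d \<and> card \<sigma> = d)"
  shows "M \<sigma> = {}"
proof -
  have "if \<sigma> \<subseteq> ground n d \<and> card \<sigma> = d
           then is_pm \<sigma> {1..d} (M \<sigma>) \<and> (\<forall>j. Inr j \<in> \<sigma> \<longrightarrow> (Inr j, j) \<in> M \<sigma>)
           else M \<sigma> = {}" using assms(1) unfolding pointed_matching_field_def by (rule spec)
  then show ?thesis using if_not_P[OF assms(2)] by metis
qed

lemma red_stack:
  assumes pmf: "pointed_matching_field n d M"
  shows "matching_stack n d (reduction n d M)"
  unfolding matching_stack_def
proof (intro allI)
  fix I J
  show "if I \<subseteq> {1..n} \<and> J \<subseteq> {1..d} \<and> card I = card J then is_pm I J (reduction n d M I J)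
        else reduction n d M I J = {}"
  proof (cases "I \<subseteq> {1..n} \<and> J \<subseteq> {1..d} \<and> card I = card J")
    case False then show ?thesis by (simp only: reduction_def if_not_P[OF False] if_False)
  next
    case True
    define \<sigma> where "\<sigma> = Inl ` I \<union> Inr ` ({1..d} - J)"
    have fin: "finite I" "finite J" using True fin_iv by blast+
    have cJ: "card J \<le> d" using True card_iv by blast
    have "card \<sigma> = d" unfolding \<sigma>_def using True fin cJ
      by (simp add: card_LR card_Diff_subset)
    moreover have "\<sigma> \<subseteq> ground n d" unfolding \<sigma>_def using True by (intro LR_ground) auto
    ultimately have pm: "is_pm \<sigma> {1..d} (M \<sigma>)" and pt: "\<And>j. Inr j \<in> \<sigma> \<Longrightarrow> (Inr j, j) \<in> M \<sigma>"
      using pmf_dom[OF pmf] by blast+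
    have red: "reduction n d M I J = {(i, j). (Inl i, j) \<in> M \<sigma>}"
      unfolding \<sigma>_def using red_eq[of I n J d M] True by blast
    have sub: "(i, j) \<in> I \<times> J" if "(Inl i, j) \<in> M \<sigma>" for i j
    proof -
      have "Inl i \<in> \<sigma>" "j \<in> {1..d}" using pm_mem[OF pm that] by auto
      then have iI: "i \<in> I" unfolding \<sigma>_def by auto
      have "j \<in> J"
      proof (rule ccontr)
        assume "j \<notin> J"
        then have "Inr j \<in> \<sigma>" unfolding \<sigma>_def using \<open>j \<in> {1..d}\<close> by auto
        then have "(Inr j, j) \<in> M \<sigma>" by (rule pt)
        then have "Inl i = Inr j" using pm_right[OF pm that] by blast
        then show False by simp
      qed
      then show ?thesis using iI by simp
    qed
    have "is_pm I J {(i, j). (Inl i, j) \<in> M \<sigma>}"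
      unfolding is_pm_def
    proof (intro conjI ballI)
      show "{(i, j). (Inl i, j) \<in> M \<sigma>} \<subseteq> I \<times> J" using sub by auto
      fix i assume "i \<in> I"
      then have "Inl i \<in> \<sigma>" unfolding \<sigma>_def by auto
      then obtain j where j: "(Inl i, j) \<in> M \<sigma>" using pm_exL[OF pm] by blast
      show "\<exists>!j. (i, j) \<in> {(i, j). (Inl i, j) \<in> M \<sigma>}"
      proof (rule ex1I[of _ j])
        show "(i, j) \<in> {(i, j). (Inl i, j) \<in> M \<sigma>}" using j by simp
        fix j' assume "(i, j') \<in> {(i, j). (Inl i, j) \<in> M \<sigma>}"
        then show "j' = j" using pm_left[OF pm j] by simp
      qed
    next
      fix j assume jJ: "j \<in> J"
      then have "j \<in> {1..d}" using True by auto
      then obtain a where a: "(a, j) \<in> M \<sigma>" using pm_exR[OF pm] by blast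
      have "\<exists>i. a = Inl i"
      proof (cases a)
        case (Inr j')
        then have "Inr j' \<in> \<sigma>" using pm_mem[OF pm a] by simp
        then have "(Inr j', j') \<in> M \<sigma>" by (rule pt)
        then have "j = j'" using pm_left[OF pm a] Inr by simp
        then show ?thesis using \<open>Inr j' \<in> \<sigma>\<close> jJ unfolding \<sigma>_def by auto
      qed simp
      then obtain i where ai: "a = Inl i" by blast
      show "\<exists>!i. (i, j) \<in> {(i, j). (Inl i, j) \<in> M \<sigma>}"
      proof (rule ex1I[of _ i])
        show "(i, j) \<in> {(i, j). (Inl i, j) \<in> M \<sigma>}" using a ai by simp
        fix i' assume "(i', j) \<in> {(i, j). (Inl i, j) \<in> M \<sigma>}"
        then have "(Inl i', j) \<in> M \<sigma>" by simp
        then have "a = Inl i'" using pm_right[OF pm a] by blast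
        then show "i' = i" using ai by simp
      qed
    qed
    then show ?thesis unfolding if_P[OF True] red .
  qed
qed

lemma pmf_Mof:
  assumes pmf: "pointed_matching_field n d M" and dom: "\<sigma> \<subseteq> ground n d" "card \<sigma> = d"
  shows "M \<sigma> = Mof d (reduction n d M) \<sigma>"
proof -
  have pm: "is_pm \<sigma> {1..d} (M \<sigma>)" and pt: "\<And>j. Inr j \<in> \<sigma> \<Longrightarrow> (Inr j, j) \<in> M \<sigma>"
    using pmf_dom[OF pmf dom] by blast+
  note D = sigma_decomp[OF dom(1)]
  have fin: "finite (rgt \<sigma>)" using D(3) fin_iv by blast
  have "card (rgt \<sigma>) \<le> d" using D(3) card_iv by blast
  then have c: "card (lft \<sigma>) = card ({1..d} - rgt \<sigma>)" using D(4) dom(2) D(3)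
    by (simp add: card_Diff_subset fin)
  have e: "Inl ` lft \<sigma> \<union> Inr ` ({1..d} - ({1..d} - rgt \<sigma>)) = \<sigma>"
    using D(1,3) by (metis Diff_Diff_Int inf.absorb_iff2)
  have red: "reduction n d M (lft \<sigma>) ({1..d} - rgt \<sigma>) = {(i, j). (Inl i, j) \<in> M \<sigma>}"
    using red_eq[OF D(2) _ c, where M = M] e by auto
  show ?thesis unfolding Mof_def red
  proof
    show "M \<sigma> \<subseteq> {(Inl i, j) |i j. (i, j) \<in> {(i, j). (Inl i, j) \<in> M \<sigma>}} \<union> {(Inr j, j) |j. j \<in> rgt \<sigma>}"
    proof
      fix x assume x: "x \<in> M \<sigma>"
      then obtain a j where aj: "x = (a, j)" by (cases x)
      show "x \<in> {(Inl i, j) |i j. (i, j) \<in> {(i, j). (Inl i, j) \<in> M \<sigma>}} \<union> {(Inr j, j) |j. j \<in> rgt \<sigma>}"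
      proof (cases a)
        case (Inl i) then show ?thesis using x aj by auto
      next
        case (Inr j')
        then have "Inr j' \<in> \<sigma>" using pm_mem[OF pm] x aj by blast
        then have "(Inr j', j') \<in> M \<sigma>" by (rule pt)
        then have "j = j'" using pm_left[OF pm] x aj Inr by blast
        then show ?thesis using aj Inr \<open>Inr j' \<in> \<sigma>\<close> unfolding rgt_def by auto
      qed
    qed
    show "{(Inl i, j) |i j. (i, j) \<in> {(i, j). (Inl i, j) \<in> M \<sigma>}} \<union> {(Inr j, j) |j. j \<in> rgt \<sigma>} \<subseteq> M \<sigma>"
      using pt unfolding rgt_def by auto
  qed
qed

lemma Mfull_pmf:
  assumes stack: "matching_stack n d S"
  shows "pointed_matching_field n d (Mfull n d S)"
  unfolding pointed_matching_field_def
proof (intro allI)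
  fix \<sigma>
  show "if \<sigma> \<subseteq> ground n d \<and> card \<sigma> = d
        then is_pm \<sigma> {1..d} (Mfull n d S \<sigma>) \<and> (\<forall>j. Inr j \<in> \<sigma> \<longrightarrow> (Inr j, j) \<in> Mfull n d S \<sigma>)
        else Mfull n d S \<sigma> = {}"
  proof (cases "\<sigma> \<subseteq> ground n d \<and> card \<sigma> = d")
    case False then show ?thesis by (simp only: Mfull_def if_not_P[OF False] if_False)
  next
    case True
    note D = sigma_decomp[OF conjunct1[OF True]]
    let ?L = "lft \<sigma>" and ?R = "rgt \<sigma>"
    have fin: "finite ?R" using D(3) fin_iv by blast
    have "card ?R \<le> d" using D(3) card_iv by blast
    then have c: "card ?L = card ({1..d} - ?R)" using D(4) True D(3)
      by (simp add: card_Diff_subset fin)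
    have P: "is_pm ?L ({1..d} - ?R) (S ?L ({1..d} - ?R))"
      using stack_pm[OF stack D(2) _ c] by blast
    have MM: "Mfull n d S \<sigma> = Mof d S \<sigma>" unfolding Mfull_def if_P[OF True] ..
    have "is_pm \<sigma> {1..d} (Mof d S \<sigma>)"
      unfolding is_pm_def
    proof (intro conjI ballI)
      show "Mof d S \<sigma> \<subseteq> \<sigma> \<times> {1..d}"
      proof
        fix x assume "x \<in> Mof d S \<sigma>"
        then consider (x) i j where "x = (Inl i, j)" "(i, j) \<in> S ?L ({1..d} - ?R)"
            | (y) j where "x = (Inr j, j)" "j \<in> ?R" unfolding Mof_def by blast
        then show "x \<in> \<sigma> \<times> {1..d}"
        proof cases
          case x
          then have "i \<in> ?L" "j \<in> {1..d}" using pm_mem[OF P x(2)] by auto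
          then show ?thesis using x(1) unfolding lft_def by simp
        next
          case y
          then show ?thesis using D(3) unfolding rgt_def by auto
        qed
      qed
      fix a assume a: "a \<in> \<sigma>"
      show "\<exists>!b. (a, b) \<in> Mof d S \<sigma>"
      proof (cases a)
        case (Inl i)
        then have "i \<in> ?L" using a unfolding lft_def by simp
        then obtain b where b: "(i, b) \<in> S ?L ({1..d} - ?R)" using pm_exL[OF P] by blast
        show ?thesis
        proof (rule ex1I[of _ b])
          show "(a, b) \<in> Mof d S \<sigma>" unfolding Mof_def using b Inl by simp
          fix b' assume "(a, b') \<in> Mof d S \<sigma>"
          then have "(i, b') \<in> S ?L ({1..d} - ?R)" unfolding Mof_def using Inl by simp
          then show "b' = b" using pm_left[OF P b] by simp
        qed
      next
        case (Inr j)
        then have "j \<in> ?R" using a unfolding rgt_def by simp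
        show ?thesis
        proof (rule ex1I[of _ j])
          show "(a, j) \<in> Mof d S \<sigma>" unfolding Mof_def using Inr \<open>j \<in> ?R\<close> by simp
          fix b' assume "(a, b') \<in> Mof d S \<sigma>"
          then show "b' = j" unfolding Mof_def using Inr by simp
        qed
      qed
    next
      fix b assume b: "b \<in> {1..d}"
      show "\<exists>!a. (a, b) \<in> Mof d S \<sigma>"
      proof (cases "b \<in> ?R")
        case True
        show ?thesis
        proof (rule ex1I[of _ "Inr b"])
          show "(Inr b, b) \<in> Mof d S \<sigma>" unfolding Mof_def using True by simp
          fix a assume a: "(a, b) \<in> Mof d S \<sigma>"
          have "(i, b) \<notin> S ?L ({1..d} - ?R)" for i using pm_mem[OF P] True by blast
          then show "a = Inr b" using a unfolding Mof_def by blast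
        qed
      next
        case False
        then obtain i where i: "(i, b) \<in> S ?L ({1..d} - ?R)" using pm_exR[OF P] b by blast
        show ?thesis
        proof (rule ex1I[of _ "Inl i"])
          show "(Inl i, b) \<in> Mof d S \<sigma>" unfolding Mof_def using i by simp
          fix a assume a: "(a, b) \<in> Mof d S \<sigma>"
          then consider (x) i' where "a = Inl i'" "(i', b) \<in> S ?L ({1..d} - ?R)"
            | (y) "a = Inr b" "b \<in> ?R" unfolding Mof_def by blast
          then show "a = Inl i"
          proof cases
            case x then show ?thesis using pm_right[OF P i x(2)] by simp
          next
            case y then show ?thesis using False by simp
          qed
        qed
      qed
    qed
    moreover have "\<forall>j. Inr j \<in> \<sigma> \<longrightarrow> (Inr j, j) \<in> Mof d S \<sigma>" unfolding Mof_def rgt_def by simp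
    ultimately show ?thesis using True MM by simp
  qed
qed

lemma red_Mfull:
  assumes stack: "matching_stack n d S"
  shows "reduction n d (Mfull n d S) = S"
proof (intro ext)
  fix I J
  show "reduction n d (Mfull n d S) I J = S I J"
  proof (cases "I \<subseteq> {1..n} \<and> J \<subseteq> {1..d} \<and> card I = card J")
    case False
    then show ?thesis using stack_empty[OF stack False] by (simp only: reduction_def if_not_P[OF False] if_False)
  next
    case True
    define \<sigma> where "\<sigma> = Inl ` I \<union> Inr ` ({1..d} - J)"
    have fin: "finite I" "finite J" using True fin_iv by blast+
    have cJ: "card J \<le> d" using True card_iv by blast
    have "card \<sigma> = d" unfolding \<sigma>_def using True fin cJ
      by (simp add: card_LR card_Diff_subset)
    moreover have "\<sigma> \<subseteq> ground n d" unfolding \<sigma>_def using True by (intro LR_ground) auto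
    ultimately have "Mfull n d S \<sigma> = Mof d S \<sigma>" unfolding Mfull_def by simp
    moreover have "{1..d} - ({1..d} - J) = J" using True by auto
    ultimately have "Mfull n d S \<sigma> = {(Inl i, j) | i j. (i, j) \<in> S I J} \<union> {(Inr j, j) | j. j \<in> {1..d} - J}"
      unfolding Mof_def \<sigma>_def by simp
    then show ?thesis using red_eq[OF conjunct1[OF True] conjunct1[OF conjunct2[OF True]] conjunct2[OF conjunct2[OF True]]]
      unfolding \<sigma>_def by auto
  qed
qed

lemma Gt_intro1: "(i, j) \<in> Ut d S I J \<Longrightarrow> (Inl i, j) \<in> Gt d S I J"
  unfolding Gt_def by simp
lemma Gt_intro2: "k \<in> {1..d} - J \<Longrightarrow> (Inr k, k) \<in> Gt d S I J"
  unfolding Gt_def by simp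
lemma Ut_intro1: "i \<in> I \<Longrightarrow> (a, b) \<in> S (I - {i}) J \<Longrightarrow> (a, b) \<in> Ut d S I J"
  unfolding Ut_def Wt_def by blast
lemma Ut_intro2: "k \<in> {1..d} - J \<Longrightarrow> (a, b) \<in> S I (insert k J) \<Longrightarrow> (a, b) \<in> Ut d S I J"
  unfolding Ut_def by blast

lemma Gt_union:
  assumes IS: "I \<subseteq> {1..n}" and JS: "J \<subseteq> {1..d}" and cIJ: "card I = card J + 1"
    and MM: "\<forall>\<sigma>. \<sigma> \<subseteq> ground n d \<and> card \<sigma> = d \<longrightarrow> M \<sigma> = Mof d S \<sigma>"
  shows "\<Union>{M \<sigma> | \<sigma>. \<sigma> \<subseteq> tau d I J \<and> card \<sigma> = d} = Gt d S I J"
proof -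
  let ?T = "tau d I J"
  have finI: "finite I" and finJ: "finite J" using IS JS fin_iv by blast+
  have cJ: "card J \<le> d" using JS card_iv by blast
  have Tg: "?T \<subseteq> ground n d" unfolding tau_def using IS by (intro LR_ground) auto
  have cT: "card ?T = d + 1" unfolding tau_def using finI finJ cJ cIJ JS
    by (simp add: card_LR card_Diff_subset)
  have finT: "finite ?T" unfolding tau_def using finI by simp
  have Mx: "M (?T - {y}) = Mof d S (?T - {y})" if "y \<in> ?T" for y
  proof -
    have "card (?T - {y}) = d" using cT that finT by simp
    moreover have "?T - {y} \<subseteq> ground n d" using Tg by blast
    ultimately show ?thesis using MM by blast
  qed
  have inU: "M (?T - {y}) \<subseteq> \<Union>{M \<sigma> | \<sigma>. \<sigma> \<subseteq> ?T \<and> card \<sigma> = d}" if "y \<in> ?T" for y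
  proof -
    have "card (?T - {y}) = d" using cT that finT by simp
    then show ?thesis by blast
  qed
  have dJ: "{1..d} - ({1..d} - J) = J" using JS by blast
  have L1: "Mof d S (?T - {Inl i}) = {(Inl i', j) | i' j. (i', j) \<in> S (I - {i}) J} \<union> {(Inr j, j) | j. j \<in> {1..d} - J}"
    for i
  proof -
    have l: "lft (?T - {Inl i}) = I - {i}" and r: "rgt (?T - {Inl i}) = {1..d} - J"
      unfolding tau_def lft_def rgt_def by auto
    show ?thesis unfolding Mof_def l r dJ ..
  qed
  have L2: "Mof d S (?T - {Inr k}) = {(Inl i', j) | i' j. (i', j) \<in> S I (insert k J)} \<union> {(Inr j, j) | j. j \<in> ({1..d} - J) - {k}}"
    if k: "k \<in> {1..d} - J" for k
  proof -
    have l: "lft (?T - {Inr k}) = I" and r: "rgt (?T - {Inr k}) = ({1..d} - J) - {k}"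
      unfolding tau_def lft_def rgt_def by auto
    have e: "{1..d} - (({1..d} - J) - {k}) = insert k J" using k JS by blast
    show ?thesis unfolding Mof_def l r e ..
  qed
  show ?thesis
  proof
    show "\<Union>{M \<sigma> | \<sigma>. \<sigma> \<subseteq> ?T \<and> card \<sigma> = d} \<subseteq> Gt d S I J"
    proof
      fix x assume "x \<in> \<Union>{M \<sigma> | \<sigma>. \<sigma> \<subseteq> ?T \<and> card \<sigma> = d}"
      then obtain \<sigma> where s: "\<sigma> \<subseteq> ?T" "card \<sigma> = d" "x \<in> M \<sigma>" by blast
      have "card \<sigma> + 1 = card ?T" using s(2) cT by simp
      then obtain y where y: "y \<in> ?T" "\<sigma> = ?T - {y}" using sub_minus1[OF finT s(1)] by blast
      have xM: "x \<in> Mof d S (?T - {y})" using Mx[OF y(1)] s(3) y(2) by simp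
      consider (a) i where "y = Inl i" "i \<in> I" | (b) k where "y = Inr k" "k \<in> {1..d} - J"
        using y(1) unfolding tau_def by blast
      then show "x \<in> Gt d S I J"
      proof cases
        case a
        then have "x \<in> {(Inl i', j) | i' j. (i', j) \<in> S (I - {i}) J} \<union> {(Inr j, j) | j. j \<in> {1..d} - J}"
          using xM L1 by simp
        then consider (p) i' j where "x = (Inl i', j)" "(i', j) \<in> S (I - {i}) J"
          | (q) j where "x = (Inr j, j)" "j \<in> {1..d} - J" by blast
        then show ?thesis
        proof cases
          case p then show ?thesis using Gt_intro1[OF Ut_intro1[where S=S and d=d, OF a(2) p(2)]] by simp
        next
          case q then show ?thesis using Gt_intro2[OF q(2)] by simp
        qed
      next
        case b
        then have "x \<in> {(Inl i', j) | i' j. (i', j) \<in> S I (insert k J)} \<union> {(Inr j, j) | j. j \<in> ({1..d} - J) - {k}}"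
          using xM L2[OF b(2)] by simp
        then consider (p) i' j where "x = (Inl i', j)" "(i', j) \<in> S I (insert k J)"
          | (q) j where "x = (Inr j, j)" "j \<in> {1..d} - J" by blast
        then show ?thesis
        proof cases
          case p then show ?thesis using Gt_intro1[OF Ut_intro2[where S=S, OF b(2) p(2)]] by simp
        next
          case q then show ?thesis using Gt_intro2[OF q(2)] by simp
        qed
      qed
    qed
    show "Gt d S I J \<subseteq> \<Union>{M \<sigma> | \<sigma>. \<sigma> \<subseteq> ?T \<and> card \<sigma> = d}"
    proof
      fix x assume x: "x \<in> Gt d S I J"
      have "I \<noteq> {}" using cIJ by auto
      then obtain i0 where i0: "i0 \<in> I" by blast
      have Ti0: "Inl i0 \<in> ?T" unfolding tau_def using i0 by simp
      consider (a) i j where "x = (Inl i, j)" "(i, j) \<in> Wt S I J"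
        | (b) i j k where "x = (Inl i, j)" "k \<in> {1..d} - J" "(i, j) \<in> S I (insert k J)"
        | (c) k where "x = (Inr k, k)" "k \<in> {1..d} - J"
        using x unfolding Gt_def Ut_def by blast
      then show "x \<in> \<Union>{M \<sigma> | \<sigma>. \<sigma> \<subseteq> ?T \<and> card \<sigma> = d}"
      proof cases
        case a
        then obtain i1 where i1: "i1 \<in> I" "(i, j) \<in> S (I - {i1}) J" unfolding Wt_def by blast
        have "Inl i1 \<in> ?T" unfolding tau_def using i1 by simp
        moreover have "x \<in> M (?T - {Inl i1})" using Mx[OF calculation] L1[of i1] i1 a by simp
        ultimately show ?thesis using inU by blast
      next
        case b
        have "Inr k \<in> ?T" unfolding tau_def using b by simp
        moreover have "x \<in> M (?T - {Inr k})" using Mx[OF calculation] L2[OF b(2)] b by simp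
        ultimately show ?thesis using inU by blast
      next
        case c
        have "x \<in> M (?T - {Inl i0})" using Mx[OF Ti0] L1[of i0] c by simp
        then show ?thesis using inU[OF Ti0] by blast
      qed
    qed
  qed
qed

lemma linkage_iff:
  assumes MM: "\<forall>\<sigma>. \<sigma> \<subseteq> ground n d \<and> card \<sigma> = d \<longrightarrow> M \<sigma> = Mof d S \<sigma>"
  shows "linkage_pmf n d M \<longleftrightarrow> LK n d S"
proof
  assume lk: "linkage_pmf n d M"
  show "LK n d S" unfolding LK_def
  proof (intro allI impI)
    fix I J assume h: "I \<subseteq> {1..n} \<and> J \<subseteq> {1..d} \<and> card I = card J + 1"
    have finI: "finite I" and finJ: "finite J" using h fin_iv by blast+
    have cJ: "card J \<le> d" using h card_iv by blast
    have Tg: "tau d I J \<subseteq> ground n d" unfolding tau_def using h by (intro LR_ground) auto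
    have cT: "card (tau d I J) = d + 1" unfolding tau_def using finI finJ cJ h
      by (simp add: card_LR card_Diff_subset)
    have "let G = \<Union>{M \<sigma> | \<sigma>. \<sigma> \<subseteq> tau d I J \<and> card \<sigma> = d}
         in bip_spanning_tree (tau d I J) {1..d} G \<and> right_deg2 {1..d} G"
      using lk Tg cT unfolding linkage_pmf_def by blast
    then show "bip_spanning_tree (tau d I J) {1..d} (Gt d S I J) \<and> right_deg2 {1..d} (Gt d S I J)"
      unfolding Let_def Gt_union[OF conjunct1[OF h] conjunct1[OF conjunct2[OF h]] conjunct2[OF conjunct2[OF h]] MM] .
  qed
next
  assume lk: "LK n d S"
  show "linkage_pmf n d M" unfolding linkage_pmf_def
  proof (intro allI impI)
    fix \<tau> assume h: "\<tau> \<subseteq> ground n d \<and> card \<tau> = d + 1"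
    note D = sigma_decomp[OF conjunct1[OF h]]
    define I where "I = lft \<tau>"
    define J where "J = {1..d} - rgt \<tau>"
    have JS: "J \<subseteq> {1..d}" unfolding J_def by blast
    have finR: "finite (rgt \<tau>)" using D(3) fin_iv by blast
    have cR: "card (rgt \<tau>) \<le> d" using D(3) card_iv by blast
    have cJ: "card J = d - card (rgt \<tau>)" unfolding J_def using D(3) finR by (simp add: card_Diff_subset)
    have cIJ: "card I = card J + 1" unfolding I_def using cJ D(4) h cR by simp
    have tauE: "\<tau> = tau d I J" unfolding tau_def I_def J_def using D(1,3)
      by (metis Diff_Diff_Int inf.absorb_iff2)
    have "bip_spanning_tree (tau d I J) {1..d} (Gt d S I J) \<and> right_deg2 {1..d} (Gt d S I J)"
      using lk D(2) JS cIJ unfolding LK_def I_def by blast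
    then show "let G = \<Union>{M \<sigma> | \<sigma>. \<sigma> \<subseteq> \<tau> \<and> card \<sigma> = d}
         in bip_spanning_tree \<tau> {1..d} G \<and> right_deg2 {1..d} G"
      unfolding Let_def tauE Gt_union[OF D(2)[folded I_def] JS cIJ MM] .
  qed
qed

theorem mainTheorem4:
  fixes n d :: nat
  assumes "0 < n" and "0 < d"
  shows "(\<forall>M. pointed_matching_field n d M \<longrightarrow>
            (linkage_pmf n d M \<longleftrightarrow> matching_left_semi_ensemble n d (reduction n d M)))
       \<and> bij_betw (reduction n d)
           {M. pointed_matching_field n d M \<and> linkage_pmf n d M}
           {S. matching_left_semi_ensemble n d S}"
proof -
  have part1: "linkage_pmf n d M \<longleftrightarrow> matching_left_semi_ensemble n d (reduction n d M)"
    if pmf: "pointed_matching_field n d M" for M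
  proof -
    have st: "matching_stack n d (reduction n d M)" using red_stack[OF pmf] .
    have "linkage_pmf n d M \<longleftrightarrow> LK n d (reduction n d M)"
    proof -
      have "\<forall>\<sigma>. \<sigma> \<subseteq> ground n d \<and> card \<sigma> = d \<longrightarrow> M \<sigma> = Mof d (reduction n d M) \<sigma>"
        using pmf_Mof[OF pmf] by blast
      then show ?thesis by (rule linkage_iff)
    qed
    also have "\<dots> \<longleftrightarrow> stack_closure n d (reduction n d M) \<and> stack_left_linkage n d (reduction n d M)"
      using LK_iff[OF st] .
    finally show ?thesis unfolding matching_left_semi_ensemble_def using st by blast
  qed
  have inj: "inj_on (reduction n d) {M. pointed_matching_field n d M \<and> linkage_pmf n d M}"
  proof (rule inj_onI)
    fix M1 M2 assume M1: "M1 \<in> {M. pointed_matching_field n d M \<and> linkage_pmf n d M}"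
      and M2: "M2 \<in> {M. pointed_matching_field n d M \<and> linkage_pmf n d M}"
      and eq: "reduction n d M1 = reduction n d M2"
    have p1: "pointed_matching_field n d M1" and p2: "pointed_matching_field n d M2" using M1 M2 by auto
    show "M1 = M2"
    proof
      fix \<sigma>
      show "M1 \<sigma> = M2 \<sigma>"
      proof (cases "\<sigma> \<subseteq> ground n d \<and> card \<sigma> = d")
        case True
        then show ?thesis using pmf_Mof[OF p1] pmf_Mof[OF p2] eq by metis
      next
        case False
        then show ?thesis using pmf_out[OF p1 False] pmf_out[OF p2 False] by simp
      qed
    qed
  qed
  have img: "reduction n d ` {M. pointed_matching_field n d M \<and> linkage_pmf n d M} = {S. matching_left_semi_ensemble n d S}"
  proof
    show "reduction n d ` {M. pointed_matching_field n d M \<and> linkage_pmf n d M} \<subseteq> {S. matching_left_semi_ensemble n d S}"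
    proof
      fix S assume "S \<in> reduction n d ` {M. pointed_matching_field n d M \<and> linkage_pmf n d M}"
      then obtain M where M: "pointed_matching_field n d M" "linkage_pmf n d M" "S = reduction n d M" by blast
      then show "S \<in> {S. matching_left_semi_ensemble n d S}" using part1[OF M(1)] by simp
    qed
    show "{S. matching_left_semi_ensemble n d S} \<subseteq> reduction n d ` {M. pointed_matching_field n d M \<and> linkage_pmf n d M}"
    proof
      fix S assume "S \<in> {S. matching_left_semi_ensemble n d S}"
      then have se: "matching_left_semi_ensemble n d S" by simp
      then have st: "matching_stack n d S" unfolding matching_left_semi_ensemble_def by blast
      have pm: "pointed_matching_field n d (Mfull n d S)" using Mfull_pmf[OF st] .
      have r: "reduction n d (Mfull n d S) = S" using red_Mfull[OF st] .
      have "linkage_pmf n d (Mfull n d S)" using part1[OF pm] r se by simp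
      then show "S \<in> reduction n d ` {M. pointed_matching_field n d M \<and> linkage_pmf n d M}"
        using pm r by (metis (mono_tags, lifting) image_eqI mem_Collect_eq)
    qed
  qed
  have "bij_betw (reduction n d) {M. pointed_matching_field n d M \<and> linkage_pmf n d M}
           {S. matching_left_semi_ensemble n d S}" unfolding bij_betw_def using inj img by (rule conjI)
  moreover have "\<forall>M. pointed_matching_field n d M \<longrightarrow>
            (linkage_pmf n d M \<longleftrightarrow> matching_left_semi_ensemble n d (reduction n d M))"
    using part1 by blast
  ultimately show ?thesis by (rule conjI[rotated])
qed

end
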